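(* The categories $\mathbf{CS}$ and $Cob'$ described in the context are not quasi-Gröbner.
   Context: Quasi-Gröbner categories. Let $\mathcal{C}$ be a small category and $c$ an object. An admissible order on the morphisms out of $c$ is a choice, for every object $c'$, of a well-order on $\mathrm{Hom}(c,c')$ such that $f\prec f'$ implies $g\circ f\prec g\circ f'$ for all $g$. On morphisms out of $c$ put the preorder $f\le g$ iff $g=h\circ f$ for some $h$; $|c/\mathcal{C}|$ is the associated poset. A poset is Noetherian if every sequence $x_1,x_2,\dots$ has $i<j$ with $x_i\le x_j$. $\mathcal{C}$ is Gröbner if for every object $c$: (G1) morphisms out of $c$ admit an admissible order, and (G2) $|c/\mathcal{C}|$ is Noetherian. A functor $\Phi:\mathcal{C}\to\mathcal{D}$ has property (F) if for every object $d$ of $\mathcal{D}$ there are finitely many objects $c_i$ of $\mathcal{C}$ and morphisms $f_i:d\to\Phi(c_i)$ such that every $f:d\to\Phi(c)$ factors as $\Phi(g)\circ f_i$ for some $i$ and $g:c_i\to c$. $\mathcal{D}$ is quasi-Gröbner if there is a Gröbner $\mathcal{C}$ and an essentially surjective functor $\mathcal{C}\to\mathcal{D}$ with property (F). Let $Cob$ be the category whose objects are finite sequences of circles (i.e.\ disjoint unions of $n\ge 0$ indexed circles) and whose morphisms are diffeomorphism classes (relative to the boundary) of compact orientable cobordisms between the corresponding disjoint unions of indexed circles, with composition by gluing. $Cob'$ is the subcategory of $Cob$ containing all morphisms except the non-identity morphisms whose source is the empty sequence $\emptyset$. $\mathbf{CS}$ is the full subcategory of the slice category $\emptyset/Cob$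 on the non-empty connected cobordisms from $\emptyset$; i.e.\ objects are connected compact orientable surfaces with indexed boundary circles (possibly closed), and a morphism $\Sigma\to\Sigma'$ is a cobordism $W$ from $\partial\Sigma$ to $\partial\Sigma'$ with $W\circ\Sigma=\Sigma'$. *)

theory Defs
  imports Main "HOL-Library.Multiset"
begin

text \<open>A small category: object set, hom-sets, composition
  Comp a b c g f = g after f for f : a -> b, g : b -> c, identities.\<close>
record ('o, 'm) smallcat =
  Ob   :: "'o set"
  Hom  :: "'o \<Rightarrow> 'o \<Rightarrow> 'm set"
  Comp :: "'o \<Rightarrow> 'o \<Rightarrow> 'o \<Rightarrow> 'm \<Rightarrow> 'm \<Rightarrow> 'm"
  Idm  :: "'o \<Rightarrow> 'm"

definition is_category :: "('o, 'm) smallcat \<Rightarrow> bool" where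
  "is_category C \<longleftrightarrow>
     (\<forall>a\<in>Ob C. Idm C a \<in> Hom C a a) \<and>
     (\<forall>a\<in>Ob C. \<forall>b\<in>Ob C. \<forall>c\<in>Ob C. \<forall>f\<in>Hom C a b. \<forall>g\<in>Hom C b c.
        Comp C a b c g f \<in> Hom C a c) \<and>
     (\<forall>a\<in>Ob C. \<forall>b\<in>Ob C. \<forall>c\<in>Ob C. \<forall>d\<in>Ob C. \<forall>f\<in>Hom C a b. \<forall>g\<in>Hom C b c. \<forall>h\<in>Hom C c d.
        Comp C a c d h (Comp C a b c g f) = Comp C a b d (Comp C b c d h g) f) \<and>
     (\<forall>a\<in>Ob C. \<forall>b\<in>Ob C. \<forall>f\<in>Hom C a b.
        Comp C a a b f (Idm C a) = f \<and> Comp C a b b (Idm C b) f = f)"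

definition out_of :: "('o, 'm) smallcat \<Rightarrow> 'o \<Rightarrow> ('o \<times> 'm) set" where
  "out_of C c = {(c', f). c' \<in> Ob C \<and> f \<in> Hom C c c'}"

definition under_le :: "('o, 'm) smallcat \<Rightarrow> 'o \<Rightarrow> 'o \<times> 'm \<Rightarrow> 'o \<times> 'm \<Rightarrow> bool" where
  "under_le C c x y \<longleftrightarrow> (\<exists>h\<in>Hom C (fst x) (fst y). snd y = Comp C c (fst x) (fst y) h (snd x))"

definition admissible_order :: "('o, 'm) smallcat \<Rightarrow> 'o \<Rightarrow> ('o \<Rightarrow> 'm rel) \<Rightarrow> bool" where
  "admissible_order C c r \<longleftrightarrow>
     (\<forall>c'\<in>Ob C. well_order_on (Hom C c c') (r c')) \<and>
     (\<forall>c'\<in>Ob C. \<forall>c''\<in>Ob C. \<forall>f\<in>Hom C c c'. \<forall>f'\<in>Hom C c c'. \<forall>g\<in>Hom C c' c''.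
        (f, f') \<in> r c' \<and> f \<noteq> f' \<longrightarrow>
        (Comp C c c' c'' g f, Comp C c c' c'' g f') \<in> r c'' \<and>
        Comp C c c' c'' g f \<noteq> Comp C c c' c'' g f')"

text \<open>Noetherianity of |c/C| (the poset associated to the preorder under_le;
  the sequence condition is the same on the preorder and on its quotient poset).\<close>
definition noetherian_under :: "('o, 'm) smallcat \<Rightarrow> 'o \<Rightarrow> bool" where
  "noetherian_under C c \<longleftrightarrow>
     (\<forall>s :: nat \<Rightarrow> 'o \<times> 'm. (\<forall>i. s i \<in> out_of C c) \<longrightarrow>
        (\<exists>i j. i < j \<and> under_le C c (s i) (s j)))"

definition groebner :: "('o, 'm) smallcat \<Rightarrow> bool" where
  "groebner C \<longleftrightarrow> (\<forall>c\<in>Ob C. (\<exists>r. admissible_order C c r) \<and> noetherian_under C c)"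

definition is_functor :: "('o, 'm) smallcat \<Rightarrow> ('p, 'n) smallcat \<Rightarrow> ('o \<Rightarrow> 'p)
    \<Rightarrow> ('o \<Rightarrow> 'o \<Rightarrow> 'm \<Rightarrow> 'n) \<Rightarrow> bool" where
  "is_functor C D FO FM \<longleftrightarrow>
     (\<forall>a\<in>Ob C. FO a \<in> Ob D) \<and>
     (\<forall>a\<in>Ob C. \<forall>b\<in>Ob C. \<forall>f\<in>Hom C a b. FM a b f \<in> Hom D (FO a) (FO b)) \<and>
     (\<forall>a\<in>Ob C. FM a a (Idm C a) = Idm D (FO a)) \<and>
     (\<forall>a\<in>Ob C. \<forall>b\<in>Ob C. \<forall>c\<in>Ob C. \<forall>f\<in>Hom C a b. \<forall>g\<in>Hom C b c.
        FM a c (Comp C a b c g f) = Comp D (FO a) (FO b) (FO c) (FM b c g) (FM a b f))"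

definition isomorphic :: "('p, 'n) smallcat \<Rightarrow> 'p \<Rightarrow> 'p \<Rightarrow> bool" where
  "isomorphic D x y \<longleftrightarrow> (\<exists>f\<in>Hom D x y. \<exists>g\<in>Hom D y x.
      Comp D x y x g f = Idm D x \<and> Comp D y x y f g = Idm D y)"

definition ess_surj :: "('o, 'm) smallcat \<Rightarrow> ('p, 'n) smallcat \<Rightarrow> ('o \<Rightarrow> 'p) \<Rightarrow> bool" where
  "ess_surj C D FO \<longleftrightarrow> (\<forall>d\<in>Ob D. \<exists>c\<in>Ob C. isomorphic D (FO c) d)"

definition property_F :: "('o, 'm) smallcat \<Rightarrow> ('p, 'n) smallcat \<Rightarrow> ('o \<Rightarrow> 'p)
    \<Rightarrow> ('o \<Rightarrow> 'o \<Rightarrow> 'm \<Rightarrow> 'n) \<Rightarrow> bool" where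
  "property_F C D FO FM \<longleftrightarrow>
     (\<forall>d\<in>Ob D. \<exists>I. finite I \<and> I \<subseteq> {(c, f). c \<in> Ob C \<and> f \<in> Hom D d (FO c)} \<and>
        (\<forall>c\<in>Ob C. \<forall>f\<in>Hom D d (FO c). \<exists>(ci, fi)\<in>I. \<exists>g\<in>Hom C ci c.
            f = Comp D d (FO ci) (FO c) (FM ci c g) fi))"

text \<open>D is quasi-Groebner via the Groebner category C and functor (FO, FM).
  D is quasi-Groebner iff such C, FO, FM exist for some types.\<close>
definition quasi_groebner_via :: "('o, 'm) smallcat \<Rightarrow> ('o \<Rightarrow> 'p)
    \<Rightarrow> ('o \<Rightarrow> 'o \<Rightarrow> 'm \<Rightarrow> 'n) \<Rightarrow> ('p, 'n) smallcat \<Rightarrow> bool" where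
  "quasi_groebner_via C FO FM D \<longleftrightarrow>
     is_category C \<and> groebner C \<and> is_functor C D FO FM \<and> ess_surj C D FO \<and> property_F C D FO FM"

text \<open>Object n = disjoint union of n indexed circles. A cobordism m -> n, up to
  diffeomorphism rel boundary, is given by the set of its components meeting the
  boundary, each recorded as (set of boundary circles it contains, genus), where
  Inl i is the i-th incoming and Inr j the j-th outgoing circle, together with
  the multiset of genera of its closed components.\<close>
type_synonym cob = "((nat + nat) set \<times> nat) set \<times> nat multiset"

definition bnd :: "nat \<Rightarrow> nat \<Rightarrow> (nat + nat) set" where
  "bnd m n = Inl ` {..<m} \<union> Inr ` {..<n}"

definition cob_hom :: "nat \<Rightarrow> nat \<Rightarrow> cob set" where
  "cob_hom m n = {(P, M).
     (\<forall>(B, g)\<in>P. B \<noteq> {}) \<and>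
     (\<Union>(B, g)\<in>P. B) = bnd m n \<and>
     (\<forall>x\<in>P. \<forall>y\<in>P. fst x \<inter> fst y \<noteq> {} \<longrightarrow> x = y)}"

definition cob_id :: "nat \<Rightarrow> cob" where
  "cob_id n = ((\<lambda>i. ({Inl i, Inr i}, 0)) ` {..<n}, {#})"

text \<open>Gluing: tagged components (True = from the first cobordism W1 : a -> b,
  False = from W2 : b -> c); components are adjacent if they share a middle circle.\<close>
definition glue_adj :: "bool \<times> ((nat + nat) set \<times> nat) \<Rightarrow> bool \<times> ((nat + nat) set \<times> nat) \<Rightarrow> bool" where
  "glue_adj x y \<longleftrightarrow>
     (fst x \<and> \<not> fst y \<and> (\<exists>j. Inr j \<in> fst (snd x) \<and> Inl j \<in> fst (snd y))) \<or>
     (\<not> fst x \<and> fst y \<and> (\<exists>j. Inl j \<in> fst (snd x) \<and> Inr j \<in> fst (snd y)))"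

definition glue_pieces :: "cob \<Rightarrow> cob \<Rightarrow> (bool \<times> ((nat + nat) set \<times> nat)) set" where
  "glue_pieces W2 W1 = Pair True ` fst W1 \<union> Pair False ` fst W2"

definition glue_classes :: "cob \<Rightarrow> cob \<Rightarrow> (bool \<times> ((nat + nat) set \<times> nat)) set set" where
  "glue_classes W2 W1 = glue_pieces W2 W1 //
     ({(x, y). x \<in> glue_pieces W2 W1 \<and> y \<in> glue_pieces W2 W1 \<and> glue_adj x y})\<^sup>*"

definition outer_bnd :: "(bool \<times> ((nat + nat) set \<times> nat)) set \<Rightarrow> (nat + nat) set" where
  "outer_bnd K = {Inl i | i. \<exists>x\<in>K. fst x \<and> Inl i \<in> fst (snd x)} \<union>
                 {Inr k | k. \<exists>x\<in>K. \<not> fst x \<and> Inr k \<in> fst (snd x)}"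

definition mid_circles :: "(bool \<times> ((nat + nat) set \<times> nat)) set \<Rightarrow> nat set" where
  "mid_circles K = {j. \<exists>x\<in>K. fst x \<and> Inr j \<in> fst (snd x)}"

text \<open>Genus of a glued component (Euler characteristic):
  sum of genera + number of gluing circles - number of pieces + 1.\<close>
definition glued_genus :: "(bool \<times> ((nat + nat) set \<times> nat)) set \<Rightarrow> nat" where
  "glued_genus K = (\<Sum>x\<in>K. snd (snd x)) + card (mid_circles K) + 1 - card K"

text \<open>cob_comp W2 W1 = W2 after W1 (glue outgoing circles of W1 to incoming of W2).\<close>
definition cob_comp :: "cob \<Rightarrow> cob \<Rightarrow> cob" where
  "cob_comp W2 W1 =
     ((\<lambda>K. (outer_bnd K, glued_genus K)) ` {K \<in> glue_classes W2 W1. outer_bnd K \<noteq> {}},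
      snd W1 + snd W2 + (\<Sum>K\<in>{K \<in> glue_classes W2 W1. outer_bnd K = {}}. {#glued_genus K#}))"

definition Cob :: "(nat, cob) smallcat" where
  "Cob = \<lparr>Ob = UNIV, Hom = cob_hom, Comp = (\<lambda>_ _ _ g f. cob_comp g f), Idm = cob_id\<rparr>"

text \<open>Cob': drop the non-identity morphisms with source the empty sequence.\<close>
definition Cob' :: "(nat, cob) smallcat" where
  "Cob' = \<lparr>Ob = UNIV,
           Hom = (\<lambda>m n. if m = 0 then cob_hom m n \<inter> {f. n = 0 \<and> f = cob_id 0} else cob_hom m n),
           Comp = (\<lambda>_ _ _ g f. cob_comp g f), Idm = cob_id\<rparr>"

text \<open>CS: full subcategory of the slice category under the empty sequence on the
  non-empty connected surfaces (exactly one component).\<close>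
definition connected_nonempty :: "cob \<Rightarrow> bool" where
  "connected_nonempty W \<longleftrightarrow> card (fst W) + size (snd W) = 1"

definition CS :: "(nat \<times> cob, cob) smallcat" where
  "CS = \<lparr>Ob = {(n, S). S \<in> cob_hom 0 n \<and> connected_nonempty S},
         Hom = (\<lambda>(n, S) (n', S'). {W \<in> cob_hom n n'. cob_comp W S = S'}),
         Comp = (\<lambda>_ _ _ g f. cob_comp g f),
         Idm = (\<lambda>(n, S). cob_id n)\<rparr>"

end

theory Submission imports Defs "HOL-Library.Infinite_Set" begin

lemma classes_single:
  assumes "\<forall>x\<in>glue_pieces W2 W1. \<forall>y\<in>glue_pieces W2 W1. \<not> glue_adj x y"
  shows "glue_classes W2 W1 = (\<lambda>x. {x}) ` glue_pieces W2 W1"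
proof -
  have "{(x, y). x \<in> glue_pieces W2 W1 \<and> y \<in> glue_pieces W2 W1 \<and> glue_adj x y} = {}"
    using assms by auto
  then show ?thesis unfolding glue_classes_def quotient_def by (simp only:) auto
qed

lemma cob_hom_finite:
  assumes "(P, M) \<in> cob_hom m n" shows "finite P"
proof -
  have c: "\<forall>x\<in>P. \<forall>y\<in>P. fst x \<inter> fst y \<noteq> {} \<longrightarrow> x = y" and ne: "\<forall>(B, g)\<in>P. B \<noteq> {}"
   and u: "(\<Union>(B, g)\<in>P. B) = bnd m n"
    using assms unfolding cob_hom_def by auto
  have inj: "inj_on fst P"
  proof (rule inj_onI)
    fix x y assume "x \<in> P" "y \<in> P" "fst x = fst y"
    moreover have "fst x \<noteq> {}" using ne \<open>x \<in> P\<close> by (cases x) auto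
    ultimately show "x = y" using c by auto
  qed
  have "fst ` P \<subseteq> Pow (bnd m n)" using u by (auto simp flip: u)
  moreover have "finite (bnd m n)" unfolding bnd_def by auto
  ultimately have "finite (fst ` P)" by (meson finite_Pow_iff finite_subset)
  then show ?thesis using inj finite_imageD by blast
qed
lemma bnd0: "bnd 0 n = Inr ` {..<n}" "bnd n 0 = Inl ` {..<n}" unfolding bnd_def by auto

lemma cs_left:
  assumes "(P, M) \<in> cob_hom 0 n"
  shows "cob_comp (P, M) ({}, {#k#}) = (P, {#k#} + M)"
proof -
  have ne: "\<forall>(B, g)\<in>P. B \<noteq> {}" and u: "(\<Union>(B, g)\<in>P. B) = Inr ` {..<n}"
    using assms unfolding cob_hom_def bnd0 by auto
  have pc: "glue_pieces (P, M) ({}, {#k#}) = Pair False ` P"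
    unfolding glue_pieces_def by simp
  have cl: "glue_classes (P, M) ({}, {#k#}) = (\<lambda>x. {x}) ` Pair False ` P"
    by (subst classes_single) (auto simp: pc glue_adj_def)
  have ob: "outer_bnd {(False, x)} = fst x \<and> fst x \<noteq> {}" if "x \<in> P" for x
  proof -
    obtain B g where x: "x = (B, g)" by force
    have "B \<subseteq> Inr ` {..<n}" using u that x by blast
    moreover have "B \<noteq> {}" using ne that x by blast
    ultimately show ?thesis unfolding x outer_bnd_def by auto
  qed
  have gg: "glued_genus {(False, x)} = snd x" for x
    unfolding glued_genus_def mid_circles_def by simp
  have e1: "{K \<in> glue_classes (P, M) ({}, {#k#}). outer_bnd K \<noteq> {}} = (\<lambda>x. {(False, x)}) ` P"
    unfolding cl using ob by auto
  have e2: "{K \<in> glue_classes (P, M) ({}, {#k#}). outer_bnd K = {}} = {}"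
    unfolding cl using ob by auto
  have "(\<lambda>K. (outer_bnd K, glued_genus K)) ` ((\<lambda>x. {(False, x)}) ` P) = P"
  proof -
    have "(\<lambda>K. (outer_bnd K, glued_genus K)) ` ((\<lambda>x. {(False, x)}) ` P) = (\<lambda>x. (fst x, snd x)) ` P"
      unfolding image_image using ob gg by (intro image_cong) auto
    then show ?thesis by simp
  qed
  then show ?thesis unfolding cob_comp_def e1 e2 by simp
qed

lemma cob'_left:
  assumes "(P, M) \<in> cob_hom n 0"
  shows "cob_comp (cob_id 0) (P, M) = (P, M)"
proof -
  have ne: "\<forall>(B, g)\<in>P. B \<noteq> {}" and u: "(\<Union>(B, g)\<in>P. B) = Inl ` {..<n}"
    using assms unfolding cob_hom_def bnd0 by auto
  have pc: "glue_pieces (cob_id 0) (P, M) = Pair True ` P"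
    unfolding glue_pieces_def cob_id_def by simp
  have cl: "glue_classes (cob_id 0) (P, M) = (\<lambda>x. {x}) ` Pair True ` P"
    by (subst classes_single) (auto simp: pc glue_adj_def)
  have ob: "outer_bnd {(True, x)} = fst x \<and> fst x \<noteq> {} \<and> glued_genus {(True, x)} = snd x" if "x \<in> P" for x
  proof -
    obtain B g where x: "x = (B, g)" by force
    have s: "B \<subseteq> Inl ` {..<n}" using u that x by blast
    moreover have "B \<noteq> {}" using ne that x by blast
    moreover have "mid_circles {(True, x)} = {}" unfolding mid_circles_def x using s by auto
    ultimately show ?thesis unfolding x outer_bnd_def glued_genus_def by auto
  qed
  have e1: "{K \<in> glue_classes (cob_id 0) (P, M). outer_bnd K \<noteq> {}} = (\<lambda>x. {(True, x)}) ` P"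
    unfolding cl using ob by auto
  have e2: "{K \<in> glue_classes (cob_id 0) (P, M). outer_bnd K = {}} = {}"
    unfolding cl using ob by auto
  have "(\<lambda>K. (outer_bnd K, glued_genus K)) ` ((\<lambda>x. {(True, x)}) ` P) = P"
  proof -
    have "(\<lambda>K. (outer_bnd K, glued_genus K)) ` ((\<lambda>x. {(True, x)}) ` P) = (\<lambda>x. (fst x, snd x)) ` P"
      unfolding image_image using ob by (intro image_cong) auto
    then show ?thesis by simp
  qed
  then show ?thesis unfolding cob_comp_def e1 e2 by (simp add: cob_id_def)
qed
lemma rt2_aux: "(x, y) \<in> ({(a,b),(b,a)})\<^sup>* \<Longrightarrow> x = y \<or> (x \<in> {a,b} \<and> y \<in> {a,b})"
  by (induction rule: rtrancl_induct) auto

lemma rt2: "({(a,b),(b,a)})\<^sup>* \<subseteq> {a,b} \<times> {a,b} \<union> Id"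
  using rt2_aux by fast

definition disk :: cob where "disk = ({({Inr 0}, 0)}, {#})"
definition capk :: "nat \<Rightarrow> cob" where "capk k = ({({Inl 0}, k)}, {#})"

lemma cap_disk: "cob_comp (capk k) disk = ({}, {#k#})"
proof -
  define a where "a = (True, ({Inr (0::nat)} :: (nat+nat) set, 0::nat))"
  define b where "b = (False, ({Inl (0::nat)} :: (nat+nat) set, k))"
  have pc: "glue_pieces (capk k) disk = {a, b}"
    unfolding glue_pieces_def capk_def disk_def a_def b_def by auto
  have R: "{(x, y). x \<in> {a,b} \<and> y \<in> {a,b} \<and> glue_adj x y} = {(a,b),(b,a)}"
    unfolding a_def b_def glue_adj_def by auto
  have ab': "(a, b) \<in> ({(a,b),(b,a)})\<^sup>*" "(b, a) \<in> ({(a,b),(b,a)})\<^sup>*" by auto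
  have sub: "({(a,b),(b,a)})\<^sup>* \<subseteq> {a,b} \<times> {a,b} \<union> Id"
    using rt2 by fast
  have i1: "({(a,b),(b,a)})\<^sup>* `` {a} = {a,b}" using ab' sub by blast
  have i2: "({(a,b),(b,a)})\<^sup>* `` {b} = {a,b}" using ab' sub by blast
  have cl: "glue_classes (capk k) disk = {{a,b}}"
    unfolding glue_classes_def pc R quotient_def using i1 i2 by auto
  have ab: "a \<noteq> b" unfolding a_def b_def by simp
  have ob: "outer_bnd {a,b} = {}" unfolding outer_bnd_def a_def b_def by auto
  have mc: "mid_circles {a,b} = {0}" unfolding mid_circles_def a_def b_def by auto
  have gg: "glued_genus {a,b} = k" unfolding glued_genus_def mc using ab
    by (simp add: a_def b_def)
  have "{K \<in> {{a,b}}. outer_bnd K = {}} = {{a,b}}" using ob by auto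
  moreover have "{K \<in> {{a,b}}. outer_bnd K \<noteq> {}} = {}" using ob by auto
  ultimately show ?thesis unfolding cob_comp_def cl using gg by (simp add: capk_def disk_def)
qed
lemma Hom_CS: "Hom CS (n, S) (n', S') = {W \<in> cob_hom n n'. cob_comp W S = S'}"
  by (simp add: CS_def)

lemma Ob_CS: "(n, S) \<in> Ob CS \<longleftrightarrow> S \<in> cob_hom 0 n \<and> connected_nonempty S"
  by (simp add: CS_def)

lemma closed_in_hom: "(({}, {#k#}) :: cob) \<in> cob_hom 0 0"
  unfolding cob_hom_def bnd_def by auto

lemma closed_obj:
  assumes "(n, S) \<in> Ob CS" "g \<in> cob_hom 0 n" "cob_comp g ({}, {#k#}) = S"
  shows "n = 0 \<and> S = ({}, {#k#})"
proof -
  obtain P M where g: "g = (P, M)" by force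
  have S: "S = (P, {#k#} + M)" using cs_left assms(2,3) g by metis
  have "card P + size ({#k#} + M) = 1" using assms(1) S unfolding Ob_CS connected_nonempty_def by simp
  then have "card P = 0" "M = {#}" by auto
  moreover have "finite P" using cob_hom_finite assms(2) g by blast
  ultimately have P: "P = {}" by simp
  then have "bnd 0 n = {}" using assms(2) g unfolding cob_hom_def by simp
  then have "Inr ` {..<n} = ({} :: (nat + nat) set)" using bnd0(1)[of n] by argo
  then have "{..<n} = {}" by blast
  then have "n = 0" by (metis empty_iff lessThan_iff neq0_conv)
  then show ?thesis using S P \<open>M = {#}\<close> by simp
qed

lemma closed_hom:
  assumes "W \<in> Hom CS (0, ({}, {#a#})) (0, ({}, {#b#}))"
  shows "a = b"
proof -
  obtain P M where W: "W = (P, M)" by force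
  have "W \<in> cob_hom 0 0" "cob_comp W ({}, {#a#}) = ({}, {#b#})" using assms unfolding Hom_CS by auto
  then have "(P, {#a#} + M) = ({}, {#b#})" using cs_left W by metis
  then have "{#a#} + M = {#b#}" by simp
  moreover have "size M = 0" using arg_cong[OF \<open>{#a#} + M = {#b#}\<close>, of size] by simp
  ultimately show ?thesis by simp
qed

lemma iso_closed:
  assumes "X \<in> Ob CS" "isomorphic CS X (0, ({}, {#k#}))"
  shows "X = (0, ({}, {#k#}))"
proof -
  obtain n S where X: "X = (n, S)" by (meson surj_pair)
  obtain g where "g \<in> Hom CS (0, ({}, {#k#})) (n, S)" using assms(2) X unfolding isomorphic_def by blast
  then have "g \<in> cob_hom 0 n" "cob_comp g ({}, {#k#}) = S" unfolding Hom_CS by auto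
  then show ?thesis using closed_obj assms(1) X by blast
qed

lemma disk_obj: "(1, disk) \<in> Ob CS"
  unfolding Ob_CS disk_def cob_hom_def bnd_def connected_nonempty_def by auto

lemma capk_hom: "capk k \<in> cob_hom 1 0"
  unfolding capk_def cob_hom_def bnd_def by auto

lemma capk_inj: "capk a = capk b \<Longrightarrow> a = b"
  unfolding capk_def by auto

lemma pigeon_enum:
  fixes p :: "nat \<Rightarrow> 'x"
  assumes "finite I" "\<And>k. p k \<in> I"
  obtains e :: "nat \<Rightarrow> nat" and a0 where "strict_mono e" "\<And>m. p (e m) = p a0"
proof -
  have "p ` UNIV \<subseteq> I" using assms(2) by auto
  then have "finite (p ` UNIV)" using assms(1) by (rule finite_subset)
  then obtain a0 where inf: "infinite {a \<in> UNIV. p a = p a0}"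
    using pigeonhole_infinite[of "UNIV :: nat set" p] by auto
  let ?e = "Infinite_Set.enumerate {a \<in> UNIV. p a = p a0}"
  have "strict_mono ?e" using strict_mono_enumerate inf by blast
  moreover have "\<And>m. p (?e m) = p a0" using enumerate_in_set[OF inf] by blast
  ultimately show ?thesis by (rule that)
qed

lemma functor_ob: "is_functor C D FO FM \<Longrightarrow> a \<in> Ob C \<Longrightarrow> FO a \<in> Ob D"
  unfolding is_functor_def by blast

lemma functor_hom: "is_functor C D FO FM \<Longrightarrow> a \<in> Ob C \<Longrightarrow> b \<in> Ob C \<Longrightarrow> f \<in> Hom C a b
   \<Longrightarrow> FM a b f \<in> Hom D (FO a) (FO b)"
  unfolding is_functor_def by blast

lemma functor_comp: "is_functor C D FO FM \<Longrightarrow> a \<in> Ob C \<Longrightarrow> b \<in> Ob C \<Longrightarrow> c \<in> Ob C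
   \<Longrightarrow> f \<in> Hom C a b \<Longrightarrow> g \<in> Hom C b c
   \<Longrightarrow> FM a c (Comp C a b c g f) = Comp D (FO a) (FO b) (FO c) (FM b c g) (FM a b f)"
  unfolding is_functor_def by blast

lemma noeth_seq:
  fixes s :: "nat \<Rightarrow> 'o \<times> 'm"
  assumes "noetherian_under C c" "\<And>m. s m \<in> out_of C c"
  obtains i j where "i < j" "under_le C c (s i) (s j)"
proof -
  have "\<forall>s. (\<forall>i. s i \<in> out_of C c) \<longrightarrow> (\<exists>(i::nat) j. i < j \<and> under_le C c (s i) (s j))"
    using assms(1) unfolding noetherian_under_def .
  then have "\<exists>i j. i < j \<and> under_le C c (s i) (s j)" using assms(2) by blast
  then show ?thesis using that by blast
qed

lemma CS_not_qg: "\<not> (\<exists>(C :: ('a, 'b) smallcat) FO FM. quasi_groebner_via C FO FM CS)"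
proof
  assume "\<exists>(C :: ('a, 'b) smallcat) FO FM. quasi_groebner_via C FO FM CS"
  then obtain C :: "('a, 'b) smallcat" and FO FM where q: "quasi_groebner_via C FO FM CS" by blast
  have gr: "groebner C" and fu: "is_functor C CS FO FM" and es: "ess_surj C CS FO"
    and pf: "property_F C CS FO FM" using q unfolding quasi_groebner_via_def by auto
  define T where "T k = (0::nat, (({}, {#k#}) :: cob))" for k
  have TO: "T k \<in> Ob CS" for k
    unfolding T_def Ob_CS connected_nonempty_def using closed_in_hom by simp
  have "\<exists>c. c \<in> Ob C \<and> FO c = T k" for k
  proof -
    obtain c where c: "c \<in> Ob C" "isomorphic CS (FO c) (T k)" using es TO unfolding ess_surj_def by blast
    have "FO c \<in> Ob CS" using functor_ob[OF fu c(1)] .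
    then have "FO c = T k" using c(2) iso_closed unfolding T_def by blast
    then show ?thesis using c(1) by blast
  qed
  then obtain c where "\<forall>k. c k \<in> Ob C \<and> FO (c k) = T k" using choice[of "\<lambda>k c. c \<in> Ob C \<and> FO c = T k"] by blast
  then have cO: "\<And>k. c k \<in> Ob C" and cT: "\<And>k. FO (c k) = T k" by auto
  have fk: "capk k \<in> Hom CS (1, disk) (FO (c k))" for k
    unfolding cT T_def Hom_CS using capk_hom cap_disk by simp
  have D1: "(1, disk) \<in> Ob CS" by (rule disk_obj)
  have "\<exists>I. finite I \<and> I \<subseteq> {(c, f). c \<in> Ob C \<and> f \<in> Hom CS (1, disk) (FO c)} \<and>
      (\<forall>c\<in>Ob C. \<forall>f\<in>Hom CS (1, disk) (FO c). \<exists>(ci, fi)\<in>I. \<exists>g\<in>Hom C ci c.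
            f = Comp CS (1, disk) (FO ci) (FO c) (FM ci c g) fi)"
    using pf D1 unfolding property_F_def by (rule bspec)
  then obtain I where I: "finite I \<and> I \<subseteq> {(c, f). c \<in> Ob C \<and> f \<in> Hom CS (1, disk) (FO c)} \<and>
      (\<forall>c\<in>Ob C. \<forall>f\<in>Hom CS (1, disk) (FO c). \<exists>(ci, fi)\<in>I. \<exists>g\<in>Hom C ci c.
            f = Comp CS (1, disk) (FO ci) (FO c) (FM ci c g) fi)" ..
  note fI = conjunct1[OF I] and IS = conjunct1[OF conjunct2[OF I]] and fac = conjunct2[OF conjunct2[OF I]]
  have "\<exists>q. fst q \<in> I \<and> snd q \<in> Hom C (fst (fst q)) (c k)" for k
  proof -
    have "\<exists>(ci, fi)\<in>I. \<exists>g\<in>Hom C ci (c k). capk k = Comp CS (1, disk) (FO ci) (FO (c k)) (FM ci (c k) g) fi"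
      using bspec[OF bspec[OF fac cO] fk] .
    then obtain ci fi g where "(ci, fi) \<in> I" "g \<in> Hom C ci (c k)" by auto
    then show ?thesis by (intro exI[of _ "((ci, fi), g)"]) simp
  qed
  then obtain q where q: "\<forall>k. fst (q k) \<in> I \<and> snd (q k) \<in> Hom C (fst (fst (q k))) (c k)"
    using choice[of "\<lambda>k q. fst q \<in> I \<and> snd q \<in> Hom C (fst (fst q)) (c k)"] by blast
  define p where "p k = fst (q k)" for k
  define gk where "gk k = snd (q k)" for k
  have pI: "\<And>k. p k \<in> I" unfolding p_def using q by blast
  have gk: "\<And>k. gk k \<in> Hom C (fst (p k)) (c k)" unfolding p_def gk_def using q by blast
  obtain e :: "nat \<Rightarrow> nat" and a0 where e: "strict_mono e" and pe: "\<And>m. p (e m) = p a0"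
  proof (rule pigeon_enum[where p=p, OF fI pI])
    fix e :: "nat \<Rightarrow> nat" and a0 assume A: "strict_mono e" and B: "\<And>m. p (e m) = p a0"
    show thesis by (rule that[of e a0, OF A B])
  qed
  define ci where "ci = fst (p a0)"
  have "p a0 \<in> {(c, f). c \<in> Ob C \<and> f \<in> Hom CS (1, disk) (FO c)}" using subsetD[OF IS pI[of a0]] .
  then have ciO: "ci \<in> Ob C" unfolding ci_def by (cases "p a0") simp
  have nt: "noetherian_under C ci" using gr ciO unfolding groebner_def by blast
  have oo: "(c (e m), gk (e m)) \<in> out_of C ci" for m
    unfolding out_of_def ci_def using cO gk[of "e m"] pe[of m] by simp
  obtain i j where ij: "i < j" and le: "under_le C ci (c (e i), gk (e i)) (c (e j), gk (e j))"
  proof (rule noeth_seq[of C ci "\<lambda>m. (c (e m), gk (e m))", OF nt oo])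
    fix i j :: nat assume "i < j" "under_le C ci ((\<lambda>m. (c (e m), gk (e m))) i) ((\<lambda>m. (c (e m), gk (e m))) j)"
    then show thesis using that by simp
  qed
  then obtain h where h: "h \<in> Hom C (c (e i)) (c (e j))" unfolding under_le_def by auto
  have "FM (c (e i)) (c (e j)) h \<in> Hom CS (FO (c (e i))) (FO (c (e j)))"
    using functor_hom[OF fu cO cO h] .
  then have "e i = e j" unfolding cT T_def by (rule closed_hom)
  then show False using strict_monoD[OF e ij] by simp
qed

lemma Hom_Cob': "Hom Cob' m n = (if m = 0 then cob_hom m n \<inter> {f. n = 0 \<and> f = cob_id 0} else cob_hom m n)"
  by (simp add: Cob'_def)

lemma Cob'_not_qg: "\<not> (\<exists>(C :: ('c, 'd) smallcat) FO FM. quasi_groebner_via C FO FM Cob')"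
proof
  assume "\<exists>(C :: ('c, 'd) smallcat) FO FM. quasi_groebner_via C FO FM Cob'"
  then obtain C :: "('c, 'd) smallcat" and FO FM where q: "quasi_groebner_via C FO FM Cob'" by blast
  have gr: "groebner C" and fu: "is_functor C Cob' FO FM" and es: "ess_surj C Cob' FO"
    and pf: "property_F C Cob' FO FM" using q unfolding quasi_groebner_via_def by auto
  have O0: "(0::nat) \<in> Ob Cob'" by (simp add: Cob'_def)
  obtain c0 where c0O: "c0 \<in> Ob C" and iso: "isomorphic Cob' (FO c0) 0"
    using es O0 unfolding ess_surj_def by blast
  have c0: "FO c0 = 0" using iso unfolding isomorphic_def Hom_Cob' by (auto split: if_splits)
  have fk: "capk k \<in> Hom Cob' 1 (FO c0)" for k
    unfolding c0 Hom_Cob' using capk_hom by simp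
  have D1: "(1::nat) \<in> Ob Cob'" by (simp add: Cob'_def)
  have "\<exists>I. finite I \<and> I \<subseteq> {(c, f). c \<in> Ob C \<and> f \<in> Hom Cob' 1 (FO c)} \<and>
      (\<forall>c\<in>Ob C. \<forall>f\<in>Hom Cob' 1 (FO c). \<exists>(ci, fi)\<in>I. \<exists>g\<in>Hom C ci c.
            f = Comp Cob' 1 (FO ci) (FO c) (FM ci c g) fi)"
    using pf D1 unfolding property_F_def by (rule bspec)
  then obtain I where I: "finite I \<and> I \<subseteq> {(c, f). c \<in> Ob C \<and> f \<in> Hom Cob' 1 (FO c)} \<and>
      (\<forall>c\<in>Ob C. \<forall>f\<in>Hom Cob' 1 (FO c). \<exists>(ci, fi)\<in>I. \<exists>g\<in>Hom C ci c.
            f = Comp Cob' 1 (FO ci) (FO c) (FM ci c g) fi)" ..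
  note fI = conjunct1[OF I] and IS = conjunct1[OF conjunct2[OF I]] and fac = conjunct2[OF conjunct2[OF I]]
  have "\<exists>q. fst q \<in> I \<and> snd q \<in> Hom C (fst (fst q)) c0 \<and>
           capk k = cob_comp (FM (fst (fst q)) c0 (snd q)) (snd (fst q))" for k
  proof -
    have "\<exists>(ci, fi)\<in>I. \<exists>g\<in>Hom C ci c0. capk k = Comp Cob' 1 (FO ci) (FO c0) (FM ci c0 g) fi"
      using bspec[OF bspec[OF fac c0O] fk] .
    then obtain ci fi g where "(ci, fi) \<in> I" "g \<in> Hom C ci c0"
       "capk k = Comp Cob' 1 (FO ci) (FO c0) (FM ci c0 g) fi" by auto
    then show ?thesis by (intro exI[of _ "((ci, fi), g)"]) (simp add: Cob'_def)
  qed
  then obtain q where q: "\<forall>k. fst (q k) \<in> I \<and> snd (q k) \<in> Hom C (fst (fst (q k))) c0 \<and>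
           capk k = cob_comp (FM (fst (fst (q k))) c0 (snd (q k))) (snd (fst (q k)))"
    using choice[of "\<lambda>k q. fst q \<in> I \<and> snd q \<in> Hom C (fst (fst q)) c0 \<and>
           capk k = cob_comp (FM (fst (fst q)) c0 (snd q)) (snd (fst q))"] by blast
  define p where "p k = fst (q k)" for k
  define gk where "gk k = snd (q k)" for k
  have pI: "\<And>k. p k \<in> I" unfolding p_def using q by blast
  have gk: "\<And>k. gk k \<in> Hom C (fst (p k)) c0" unfolding p_def gk_def using q by blast
  have eq: "\<And>k. capk k = cob_comp (FM (fst (p k)) c0 (gk k)) (snd (p k))"
    unfolding p_def gk_def using q by blast
  obtain e :: "nat \<Rightarrow> nat" and a0 where e: "strict_mono e" and pe: "\<And>m. p (e m) = p a0"
  proof (rule pigeon_enum[where p=p, OF fI pI])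
    fix e :: "nat \<Rightarrow> nat" and a0 assume A: "strict_mono e" and B: "\<And>m. p (e m) = p a0"
    show thesis by (rule that[of e a0, OF A B])
  qed
  define ci where "ci = fst (p a0)"
  have "p a0 \<in> {(c, f). c \<in> Ob C \<and> f \<in> Hom Cob' 1 (FO c)}" using subsetD[OF IS pI[of a0]] .
  then have ciO: "ci \<in> Ob C" unfolding ci_def by (cases "p a0") simp
  have gk': "gk (e m) \<in> Hom C ci c0" for m using gk[of "e m"] pe[of m] unfolding ci_def by simp
  have eq': "capk (e m) = cob_comp (FM ci c0 (gk (e m))) (snd (p a0))" for m
    using eq[of "e m"] pe[of m] unfolding ci_def by simp
  have nt: "noetherian_under C ci" using gr ciO unfolding groebner_def by blast
  have oo: "(c0, gk (e m)) \<in> out_of C ci" for m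
    unfolding out_of_def using c0O gk' by simp
  obtain i j where ij: "i < j" and le: "under_le C ci (c0, gk (e i)) (c0, gk (e j))"
  proof (rule noeth_seq[of C ci "\<lambda>m. (c0, gk (e m))", OF nt oo])
    fix i j :: nat assume "i < j" "under_le C ci ((\<lambda>m. (c0, gk (e m))) i) ((\<lambda>m. (c0, gk (e m))) j)"
    then show thesis using that by simp
  qed
  then obtain h where h: "h \<in> Hom C c0 c0" and hj: "gk (e j) = Comp C ci c0 c0 h (gk (e i))"
    unfolding under_le_def by auto
  have "FM ci c0 (gk (e j)) = Comp Cob' (FO ci) (FO c0) (FO c0) (FM c0 c0 h) (FM ci c0 (gk (e i)))"
    unfolding hj using functor_comp[OF fu ciO c0O c0O gk' h] .
  then have F1: "FM ci c0 (gk (e j)) = cob_comp (FM c0 c0 h) (FM ci c0 (gk (e i)))"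
    by (simp add: Cob'_def)
  have "FM c0 c0 h \<in> Hom Cob' (FO c0) (FO c0)" using functor_hom[OF fu c0O c0O h] .
  then have F2: "FM c0 c0 h = cob_id 0" unfolding c0 Hom_Cob' by simp
  have "FM ci c0 (gk (e i)) \<in> Hom Cob' (FO ci) (FO c0)" using functor_hom[OF fu ciO c0O gk'] .
  then have "FM ci c0 (gk (e i)) \<in> cob_hom (FO ci) 0" unfolding c0 Hom_Cob' by (auto split: if_splits)
  then have "cob_comp (cob_id 0) (FM ci c0 (gk (e i))) = FM ci c0 (gk (e i))"
    using cob'_left by (metis surj_pair)
  then have "FM ci c0 (gk (e j)) = FM ci c0 (gk (e i))" using F1 F2 by simp
  then have "capk (e j) = capk (e i)" using eq'[of i] eq'[of j] by simp
  then have "e i = e j" using capk_inj by metis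
  then show False using strict_monoD[OF e ij] by simp
qed

theorem proposition4p4:
  shows "\<not> (\<exists>(C :: ('a, 'b) smallcat) FO FM. quasi_groebner_via C FO FM CS) \<and>
         \<not> (\<exists>(C :: ('c, 'd) smallcat) FO FM. quasi_groebner_via C FO FM Cob')"
  using CS_not_qg Cob'_not_qg by blast

end
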